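(* Let $n\ge2$, let $B$ be the open unit ball of $\mathbb{R}^n$ centered at $0$, let $\psi\in C_0^\infty(\mathbb{R}^n)$ with $\operatorname{supp}\psi\subseteq B$ and $\psi\not\equiv0$, and let $\Omega\subset\mathbb{R}^n$ be a bounded open set star-shaped with respect to every point of $\overline B$. Let $q>n$, $F\in L^q(\Omega)$, and define for $x\in\mathbb{R}^n$ $$v(x)=\int_\Omega F(y)\left[\frac{x-y}{|x-y|^n}\int_{|x-y|}^{+\infty}\psi\Big(y+\xi\frac{x-y}{|x-y|}\Big)\xi^{n-1}d\xi\right]dy.$$ Then $v\in C^0(\mathbb{R}^n)$ (in particular $v\in C^0(\overline\Omega)$).
   Context: $\Omega$ is star-shaped with respect to a point $p$ if $p\in\Omega$ and for every $y\in\Omega$ the segment joining $p$ and $y$ lies in $\Omega$. *)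

theory Defs
  imports "HOL-Analysis.Analysis"
begin

definition star_shaped_wrt :: "'a::real_vector set \<Rightarrow> 'a \<Rightarrow> bool" where
  "star_shaped_wrt \<Omega> p \<longleftrightarrow> p \<in> \<Omega> \<and> (\<forall>y\<in>\<Omega>. closed_segment p y \<subseteq> \<Omega>)"

fun Ck :: "nat \<Rightarrow> ('a::euclidean_space \<Rightarrow> real) \<Rightarrow> bool" where
  "Ck 0 f = continuous_on UNIV f"
| "Ck (Suc k) f = ((\<forall>x. f differentiable (at x)) \<and>
      (\<forall>i\<in>Basis. Ck k (\<lambda>x. frechet_derivative f (at x) i)))"

definition smooth :: "('a::euclidean_space \<Rightarrow> real) \<Rightarrow> bool" where
  "smooth f \<longleftrightarrow> (\<forall>k. Ck k f)"

definition supp :: "('a::topological_space \<Rightarrow> real) \<Rightarrow> 'a set" where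
  "supp f = closure {x. f x \<noteq> 0}"

end

theory Submission
  imports Defs
begin


lemma Icc_fin: "emeasure lborel {a..b::real} < top"
  using emeasure_lborel_cbox_finite[of a b] by simp

locale kern =
  fixes \<psi> :: "'a::euclidean_space \<Rightarrow> real" and M :: real
  assumes psi_cont: "continuous_on UNIV \<psi>"
    and psi_zero: "\<And>z. \<psi> z \<noteq> 0 \<Longrightarrow> norm z < 1"
    and psi_bdd: "\<And>z. \<bar>\<psi> z\<bar> \<le> M"
begin

lemma M_nonneg: "0 \<le> M" using psi_bdd[of 0] by linarith

lemma psi_meas[measurable]: "\<psi> \<in> borel_measurable borel"
  using psi_cont by (simp add: borel_measurable_continuous_onI)

definition gI where "gI x y t = \<psi> (y + t *\<^sub>R (x - y)) * t ^ (DIM('a) - 1)"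
definition g where "g x y = (LBINT t:{1..}. gI x y t)"
definition K where "K x y = g x y *\<^sub>R (x - y)"

lemma subst:
  assumes "x \<noteq> y"
  shows "(LBINT \<xi>:{norm (x - y)..}. \<psi> (y + (\<xi> / norm (x - y)) *\<^sub>R (x - y)) * \<xi> ^ (DIM('a) - 1))
         / norm (x - y) ^ DIM('a) = g x y"
proof -
  define d where "d = norm (x - y)"
  have d: "d > 0" using assms by (simp add: d_def)
  define H where "H \<xi> = indicator {d..} \<xi> *\<^sub>R (\<psi> (y + (\<xi> / d) *\<^sub>R (x - y)) * \<xi> ^ (DIM('a) - 1))" for \<xi>
  have "(LBINT \<xi>:{d..}. \<psi> (y + (\<xi> / d) *\<^sub>R (x - y)) * \<xi> ^ (DIM('a) - 1)) = integral\<^sup>L lborel H"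
    by (simp add: set_lebesgue_integral_def H_def[abs_def])
  also have "\<dots> = \<bar>d\<bar> *\<^sub>R integral\<^sup>L lborel (\<lambda>t. H (0 + d * t))"
    using d by (intro lborel_integral_real_affine) simp
  also have "(\<lambda>t. H (0 + d * t)) = (\<lambda>t. d ^ (DIM('a) - 1) * (indicator {1..} t *\<^sub>R gI x y t))"
  proof
    fix t
    have "indicator {d..} (d * t) = (indicator {1..} t :: real)"
      using d by (simp add: indicator_def)
    then show "H (0 + d * t) = d ^ (DIM('a) - 1) * (indicator {1..} t *\<^sub>R gI x y t)"
      using d by (simp add: H_def gI_def power_mult_distrib)
  qed
  also have "integral\<^sup>L lborel (\<lambda>t. d ^ (DIM('a) - 1) * (indicator {1..} t *\<^sub>R gI x y t))
      = d ^ (DIM('a) - 1) * g x y"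
    by (simp add: g_def set_lebesgue_integral_def)
  finally have "(LBINT \<xi>:{d..}. \<psi> (y + (\<xi> / d) *\<^sub>R (x - y)) * \<xi> ^ (DIM('a) - 1)) = d ^ DIM('a) * g x y"
    using d by (simp add: power_eq_if)
  then show ?thesis using d by (simp add: d_def[symmetric])
qed

lemma gI_zero:
  assumes "1 \<le> t" "norm y + 1 \<le> t * norm (x - y)"
  shows "gI x y t = 0"
proof (rule ccontr)
  assume "gI x y t \<noteq> 0"
  then have "\<psi> (y + t *\<^sub>R (x - y)) \<noteq> 0" by (auto simp: gI_def)
  then have "norm (y + t *\<^sub>R (x - y)) < 1" by (rule psi_zero)
  moreover have "norm (t *\<^sub>R (x - y)) \<le> norm (y + t *\<^sub>R (x - y)) + norm y"
    by (metis add_diff_cancel_left' norm_triangle_ineq4)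
  ultimately show False using assms by simp
qed

lemma gI_cont: "continuous_on UNIV (gI x y)"
  unfolding gI_def[abs_def]
  by (intro continuous_intros continuous_on_compose2[OF psi_cont]) auto

lemma gI_bound: "1 \<le> t \<Longrightarrow> t \<le> T \<Longrightarrow> \<bar>gI x y t\<bar> \<le> M * T ^ (DIM('a) - 1)"
  unfolding gI_def abs_mult
  by (intro mult_mono psi_bdd M_nonneg) (auto intro: power_mono)

lemma g_trunc:
  assumes "1 \<le> T" "norm y + 1 \<le> T * norm (x - y)"
  shows "g x y = integral\<^sup>L lborel (\<lambda>t. indicator {1..T} t * gI x y t)"
proof -
  have *: "indicator {1..} t *\<^sub>R gI x y t = indicator {1..T} t * gI x y t" for t
  proof (cases "t \<le> T")
    case False
    then have "norm y + 1 \<le> t * norm (x - y)"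
      using assms(2) by (meson mult_right_mono norm_ge_zero order_trans nle_le)
    then show ?thesis using False assms(1) gI_zero[of t y x] by (auto simp: indicator_def)
  qed (auto simp: indicator_def)
  show ?thesis unfolding g_def set_lebesgue_integral_def by (simp only: *)
qed

lemma trunc_integrable: "integrable lborel (\<lambda>t. indicator {1..T} t * gI x y t)"
proof -
  have "set_integrable lborel {1..T} (gI x y)"
    by (rule borel_integrable_atLeastAtMost') (rule continuous_on_subset[OF gI_cont], auto)
  then show ?thesis by (simp add: set_integrable_def)
qed

lemma trunc_bound:
  assumes "1 \<le> T"
  shows "\<bar>integral\<^sup>L lborel (\<lambda>t. indicator {1..T} t * gI x y t)\<bar> \<le> (T - 1) * (M * T ^ (DIM('a) - 1))"
proof -
  have "\<bar>integral\<^sup>L lborel (\<lambda>t. indicator {1..T} t * gI x y t)\<bar>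
      \<le> integral\<^sup>L lborel (\<lambda>t. norm (indicator {1..T} t * gI x y t))"
    using integral_norm_bound by (metis real_norm_def)
  also have "\<dots> \<le> integral\<^sup>L lborel (\<lambda>t. (M * T ^ (DIM('a) - 1)) * indicator {1..T} t)"
    using trunc_integrable
    by (intro integral_mono integrable_mult_right integrable_real_indicator)
      (auto simp: indicator_def intro!: gI_bound[simplified] Icc_fin)
  also have "\<dots> = (T - 1) * (M * T ^ (DIM('a) - 1))"
    using assms by (simp add: measure_lborel_Icc)
  finally show ?thesis .
qed

lemma K_bound:
  assumes "x \<noteq> y" "norm y \<le> R"
  shows "norm (K x y) \<le> M * (R + 1) ^ DIM('a) * norm (x - y) powr (1 - real DIM('a))"
proof -
  define d where "d = norm (x - y)"
  have d: "d > 0" using assms by (simp add: d_def)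
  define T where "T = max 1 ((norm y + 1) / d)"
  have T1: "1 \<le> T" by (simp add: T_def)
  have Td: "norm y + 1 \<le> T * d" using d
    by (simp add: T_def field_simps max_def)
  have gb: "\<bar>g x y\<bar> \<le> (T - 1) * (M * T ^ (DIM('a) - 1))"
    using g_trunc[OF T1 Td[unfolded d_def]] trunc_bound[OF T1] by simp
  have nK: "norm (K x y) = \<bar>g x y\<bar> * d" by (simp add: K_def d_def)
  have pw: "d powr (1 - real DIM('a)) = d / d ^ DIM('a)"
    using d by (simp add: powr_diff powr_realpow)
  have rhs0: "0 \<le> M * (R + 1) ^ DIM('a) * (d / d ^ DIM('a))"
    using d M_nonneg assms(2) order_trans[OF norm_ge_zero assms(2)]
    by (intro mult_nonneg_nonneg zero_le_power) auto
  show ?thesis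
  proof (cases "(norm y + 1) / d \<le> 1")
    case True
    then have "T = 1" by (simp add: T_def)
    then have "g x y = 0" using gb by simp
    then show ?thesis using rhs0 pw by (simp add: K_def d_def)
  next
    case False
    then have TT: "T = (norm y + 1) / d" by (simp add: T_def)
    have "norm (K x y) \<le> (T - 1) * (M * T ^ (DIM('a) - 1)) * d"
      using nK gb d by (simp add: mult_right_mono)
    also have "\<dots> \<le> T * (M * T ^ (DIM('a) - 1)) * d"
      using T1 d M_nonneg by (intro mult_right_mono mult_right_mono) auto
    also have "\<dots> = M * T ^ DIM('a) * d"
      by (simp add: power_eq_if)
    also have "\<dots> = M * (norm y + 1) ^ DIM('a) * (d / d ^ DIM('a))"
      by (simp add: TT power_divide)
    also have "\<dots> \<le> M * (R + 1) ^ DIM('a) * (d / d ^ DIM('a))"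
      using assms(2) M_nonneg d
      by (intro mult_right_mono mult_left_mono power_mono) auto
    finally show ?thesis using pw by (simp add: d_def)
  qed
qed

lemma g_cont:
  assumes "x0 \<noteq> y0"
  shows "continuous (at (x0, y0)) (\<lambda>p. g (fst p) (snd p))"
  unfolding continuous_at_sequentially comp_def
proof (intro allI impI)
  fix p :: "nat \<Rightarrow> 'a \<times> 'a"
  assume p: "p \<longlonglongrightarrow> (x0, y0)"
  define d0 where "d0 = norm (x0 - y0)"
  have d0: "d0 > 0" using assms by (simp add: d0_def)
  define T where "T = max 1 ((norm y0 + 2) * 2 / d0)"
  have T1: "1 \<le> T" by (simp add: T_def)
  have TdA: "(norm y0 + 2) * 2 \<le> T * d0" using d0
    by (simp add: T_def field_simps max_def)
  have pf: "(\<lambda>k. fst (p k)) \<longlonglongrightarrow> x0" using tendsto_fst[OF p] by simp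
  have ps: "(\<lambda>k. snd (p k)) \<longlonglongrightarrow> y0" using tendsto_snd[OF p] by simp
  have l1: "(\<lambda>k. norm (fst (p k) - snd (p k))) \<longlonglongrightarrow> d0"
    unfolding d0_def by (intro tendsto_norm tendsto_diff pf ps)
  have l2: "(\<lambda>k. norm (snd (p k))) \<longlonglongrightarrow> norm y0"
    by (intro tendsto_norm ps)
  have ev1: "eventually (\<lambda>k. d0 / 2 < norm (fst (p k) - snd (p k))) sequentially"
    using l1 d0 by (intro order_tendstoD) auto
  have ev2: "eventually (\<lambda>k. norm (snd (p k)) < norm y0 + 1) sequentially"
    using l2 by (intro order_tendstoD) auto
  have ev: "eventually (\<lambda>k. integral\<^sup>L lborel (\<lambda>t. indicator {1..T} t * gI (fst (p k)) (snd (p k)) t)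
      = g (fst (p k)) (snd (p k))) sequentially"
    using ev1 ev2
  proof eventually_elim
    case (elim k)
    have "T * (d0 / 2) \<le> T * norm (fst (p k) - snd (p k))"
      using elim T1 by (intro mult_left_mono) auto
    moreover have "norm (snd (p k)) + 1 \<le> T * (d0 / 2)" using TdA elim by simp
    ultimately show ?case using g_trunc[OF T1] by simp
  qed
  have g0: "g x0 y0 = integral\<^sup>L lborel (\<lambda>t. indicator {1..T} t * gI x0 y0 t)"
  proof (rule g_trunc[OF T1])
    show "norm y0 + 1 \<le> T * norm (x0 - y0)" using TdA norm_ge_zero[of y0] unfolding d0_def by (smt (verit))
  qed
  have "(\<lambda>k. integral\<^sup>L lborel (\<lambda>t. indicator {1..T} t * gI (fst (p k)) (snd (p k)) t))
      \<longlonglongrightarrow> integral\<^sup>L lborel (\<lambda>t. indicator {1..T} t * gI x0 y0 t)"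
  proof (rule integral_dominated_convergence[where w="\<lambda>t. (M * T ^ (DIM('a) - 1)) * indicator {1..T} t"])
    show "(\<lambda>t. indicator {1..T} t * gI x0 y0 t) \<in> borel_measurable lborel"
      using trunc_integrable by blast
    show "(\<lambda>t. indicator {1..T} t * gI (fst (p k)) (snd (p k)) t) \<in> borel_measurable lborel" for k
      using trunc_integrable by blast
    show "integrable lborel (\<lambda>t. (M * T ^ (DIM('a) - 1)) * indicator {1..T} t)"
      by (intro integrable_mult_right integrable_real_indicator) (auto simp: Icc_fin)
    show "AE t in lborel. (\<lambda>k. indicator {1..T} t * gI (fst (p k)) (snd (p k)) t)
        \<longlonglongrightarrow> indicator {1..T} t * gI x0 y0 t"
    proof (rule AE_I2)
      fix t
      have c: "isCont \<psi> (y0 + t *\<^sub>R (x0 - y0))"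
        using psi_cont by (simp add: continuous_on_eq_continuous_at)
      have "(\<lambda>k. snd (p k) + t *\<^sub>R (fst (p k) - snd (p k))) \<longlonglongrightarrow> y0 + t *\<^sub>R (x0 - y0)"
        by (intro tendsto_add tendsto_scaleR tendsto_diff tendsto_const pf ps)
      from isCont_tendsto_compose[OF c this]
      show "(\<lambda>k. indicator {1..T} t * gI (fst (p k)) (snd (p k)) t) \<longlonglongrightarrow> indicator {1..T} t * gI x0 y0 t"
        unfolding gI_def by (intro tendsto_intros)
    qed
    show "AE t in lborel. norm (indicator {1..T} t * gI (fst (p k)) (snd (p k)) t)
        \<le> M * T ^ (DIM('a) - 1) * indicator {1..T} t" for k
      by (rule AE_I2) (auto simp: indicator_def intro!: gI_bound[simplified])
  qed
  then show "(\<lambda>k. g (fst (p k)) (snd (p k))) \<longlonglongrightarrow> g (fst (x0, y0)) (snd (x0, y0))"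
    using ev g0 by (simp add: tendsto_cong)
qed

lemma K_diag: "K x x = 0" by (simp add: K_def)

lemma g_cont_x: "y \<noteq> x0 \<Longrightarrow> isCont (\<lambda>x. g x y) x0"
  using continuous_at_compose[of x0 "\<lambda>x. (x, y)" "\<lambda>p. g (fst p) (snd p)"] g_cont[of x0 y]
  by (auto simp: comp_def intro: continuous_intros)

lemma g_cont_y: "x \<noteq> y0 \<Longrightarrow> isCont (\<lambda>y. g x y) y0"
  using continuous_at_compose[of y0 "\<lambda>y. (x, y)" "\<lambda>p. g (fst p) (snd p)"] g_cont[of x y0]
  by (auto simp: comp_def intro: continuous_intros)

lemma K_cont_x: "y \<noteq> x0 \<Longrightarrow> isCont (\<lambda>x. K x y) x0"
  unfolding K_def by (intro continuous_intros g_cont_x)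

lemma K_cont_y: "x \<noteq> y0 \<Longrightarrow> isCont (\<lambda>y. K x y) y0"
  unfolding K_def by (intro continuous_intros g_cont_y)

lemma K_meas_borel: "(\<lambda>y. K x y) \<in> borel_measurable borel"
proof -
  have "continuous_on (UNIV - {x}) (\<lambda>y. K x y)"
    by (intro continuous_at_imp_continuous_on ballI K_cont_y) auto
  then have "(\<lambda>y. indicator (UNIV - {x}) y *\<^sub>R K x y) \<in> borel_measurable borel"
    by (intro borel_measurable_continuous_on_indicator) auto
  moreover have "(\<lambda>y. indicator (UNIV - {x}) y *\<^sub>R K x y) = (\<lambda>y. K x y)"
    by (auto simp: indicator_def K_diag)
  ultimately show ?thesis by simp
qed

lemma K_meas: "(\<lambda>y. K x y) \<in> borel_measurable lebesgue"
  by (rule measurable_completion) (simp add: K_meas_borel)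

end


lemma pow_ident:
  fixes r a V :: real and k N :: nat
  assumes r: "r > 0"
  shows "(r / 2 ^ (k + 1)) powr (-a) * (V * (r / 2 ^ k) ^ N)
       = V * 2 powr a * r powr (real N - a) * (2 powr (a - real N)) ^ k"
proof -
  have e0: "(2 * 2 powr real k) powr a = 2 powr (a * (1 + real k))"
    by (simp add: powr_mult powr_powr powr_add[symmetric] algebra_simps)
  have e1: "(r / 2 ^ (k + 1)) powr (-a) = r powr (-a) * 2 powr (a * (k + 1))"
    using r by (simp add: powr_divide powr_minus_divide powr_realpow[symmetric] powr_powr
        divide_simps powr_minus mult.commute e0)
  have e2: "(r / 2 ^ k) ^ N = r powr N / 2 powr (real k * N)"
    using r by (simp add: powr_realpow[symmetric] powr_divide powr_powr)
  have e3: "(2 powr (a - real N)) ^ k = 2 powr ((a - real N) * k)"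
    by (simp add: powr_realpow[symmetric] powr_powr)
  have e4: "r powr (real N - a) = r powr N * r powr (-a)"
    using r by (simp add: powr_add[symmetric])
  have e5: "2 powr (a * (k + 1)) / 2 powr (real k * N) = 2 powr a * 2 powr ((a - real N) * k)"
    by (simp add: powr_add[symmetric] powr_diff[symmetric] algebra_simps)
  show ?thesis
    unfolding e1 e2 e3 e4
    using e5 by (simp add: field_simps)
qed

lemma exists_dyadic:
  fixes r \<rho> :: real
  assumes "0 < \<rho>" "\<rho> < r"
  shows "\<exists>k::nat. r / 2 ^ (k + 1) < \<rho> \<and> \<rho> \<le> r / 2 ^ k"
proof -
  define P where "P k \<longleftrightarrow> r / 2 ^ (k + 1) < \<rho>" for k :: nat
  obtain n :: nat where n: "r / \<rho> < 2 ^ n" using real_arch_pow[of 2 "r / \<rho>"] by auto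
  have "P n" using n assms by (simp add: P_def field_simps)
  then have "\<exists>k. P k" by blast
  define k where "k = (LEAST k. P k)"
  have Pk: "P k" unfolding k_def by (rule LeastI_ex) fact
  have "\<rho> \<le> r / 2 ^ k"
  proof (cases k)
    case 0 then show ?thesis using assms by simp
  next
    case (Suc j)
    then have "\<not> P j" using not_less_Least[of j P] unfolding k_def[symmetric] by auto
    then show ?thesis using Suc by (simp add: P_def)
  qed
  then show ?thesis using Pk P_def by blast
qed

lemma ball_powr_nn:
  fixes c :: "'a::euclidean_space" and a r :: real
  assumes a: "0 \<le> a" "a < real DIM('a)" and r: "0 < r"
  shows "(\<integral>\<^sup>+z. ennreal (indicator (ball c r) z * norm (z - c) powr (-a)) \<partial>lborel)
      \<le> ennreal (unit_ball_vol DIM('a) * 2 powr a / (1 - 2 powr (a - DIM('a))) * r powr (DIM('a) - a))"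
proof -
  define N where "N = DIM('a)"
  define V where "V = unit_ball_vol N"
  have V0: "0 \<le> V" unfolding V_def unit_ball_vol_def by (intro divide_nonneg_pos) auto
  define t where "t k z = ennreal ((r / 2 ^ (k + 1)) powr (-a) * indicator (cball c (r / 2 ^ k)) z)" for k z
  have pt: "ennreal (indicator (ball c r) z * norm (z - c) powr (-a)) \<le> (\<Sum>k. t k z)" for z
  proof (cases "z \<in> ball c r \<and> z \<noteq> c")
    case False
    then have h: "indicator (ball c r) z * norm (z - c) powr (-a) = 0" by (auto simp: indicator_def)
    show ?thesis unfolding h ennreal_0 by (rule zero_le)
  next
    case True
    define \<rho> where "\<rho> = norm (z - c)"
    have \<rho>: "0 < \<rho>" "\<rho> < r" using True by (auto simp: \<rho>_def dist_norm norm_minus_commute)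
    obtain k where k: "r / 2 ^ (k + 1) < \<rho>" "\<rho> \<le> r / 2 ^ k" using exists_dyadic[OF \<rho>] by blast
    have "ennreal (indicator (ball c r) z * norm (z - c) powr (-a)) = ennreal (\<rho> powr (-a))"
      using True by (simp add: \<rho>_def)
    also have "\<dots> \<le> ennreal ((r / 2 ^ (k + 1)) powr (-a))"
      using k a r by (intro ennreal_leI powr_mono2') auto
    also have "\<dots> = t k z"
      using k by (simp add: t_def dist_norm \<rho>_def norm_minus_commute)
    also have "\<dots> \<le> (\<Sum>k. t k z)"
      using sum_le_suminf[OF summableI, of "{k}" "\<lambda>k. t k z"] by simp
    finally show ?thesis .
  qed
  have "(\<integral>\<^sup>+z. ennreal (indicator (ball c r) z * norm (z - c) powr (-a)) \<partial>lborel)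
      \<le> (\<integral>\<^sup>+z. (\<Sum>k. t k z) \<partial>lborel)"
    by (intro nn_integral_mono pt)
  also have "\<dots> = (\<Sum>k. integral\<^sup>N lborel (t k))"
  proof (rule nn_integral_suminf)
    fix k
    show "t k \<in> borel_measurable lborel"
      unfolding t_def
      by (intro measurable_compose[OF _ measurable_ennreal] borel_measurable_times
          borel_measurable_const borel_measurable_indicator) simp
  qed
  also have "\<dots> = (\<Sum>k. ennreal (V * 2 powr a * r powr (real N - a) * (2 powr (a - real N)) ^ k))"
  proof (rule suminf_cong)
    fix k
    have "integral\<^sup>N lborel (t k) = (\<integral>\<^sup>+z. ennreal ((r / 2 ^ (k + 1)) powr (-a)) * indicator (cball c (r / 2 ^ k)) z \<partial>lborel)"
      unfolding t_def by (intro nn_integral_cong) (simp add: ennreal_mult indicator_def)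
    also have "\<dots> = ennreal ((r / 2 ^ (k + 1)) powr (-a)) * emeasure lborel (cball c (r / 2 ^ k))"
      by (rule nn_integral_cmult_indicator) simp
    also have "\<dots> = ennreal ((r / 2 ^ (k + 1)) powr (-a) * (V * (r / 2 ^ k) ^ N))"
      using r V0 by (simp add: emeasure_cball V_def N_def ennreal_mult)
    also have "\<dots> = ennreal (V * 2 powr a * r powr (real N - a) * (2 powr (a - real N)) ^ k)"
      by (simp only: pow_ident[OF r])
    finally show "integral\<^sup>N lborel (t k) = ennreal (V * 2 powr a * r powr (real N - a) * (2 powr (a - real N)) ^ k)" .
  qed
  also have "\<dots> = ennreal (V * 2 powr a * r powr (real N - a) * (1 / (1 - 2 powr (a - real N))))"
  proof (rule suminf_ennreal_eq)
    show "0 \<le> V * 2 powr a * r powr (real N - a) * (2 powr (a - real N)) ^ k" for k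
      using V0 by simp
    have "2 powr (a - real N) < 1" using a by (intro powr_less_one) (auto simp: N_def)
    then have "(\<lambda>k. (2 powr (a - real N)) ^ k) sums (1 / (1 - 2 powr (a - real N)))"
      by (intro geometric_sums) simp
    then show "(\<lambda>k. V * 2 powr a * r powr (real N - a) * (2 powr (a - real N)) ^ k) sums
        (V * 2 powr a * r powr (real N - a) * (1 / (1 - 2 powr (a - real N))))"
      by (rule sums_mult)
  qed
  also have "\<dots> = ennreal (unit_ball_vol DIM('a) * 2 powr a / (1 - 2 powr (a - DIM('a))) * r powr (DIM('a) - a))"
    by (simp add: V_def N_def)
  finally show ?thesis .
qed



lemma young_lam:
  fixes u w lam q q' :: real
  assumes q: "q > 1" and q': "q' = q / (q - 1)" and u: "0 \<le> u" and w: "0 \<le> w" and lam: "0 < lam"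
  shows "u * w \<le> lam powr q * u powr q + lam powr (- q') * w powr q'"
proof -
  have q'1: "q' > 1" using q unfolding q' by (simp add: less_divide_eq)
  have sum1: "1 / q + 1 / q' = 1" using q unfolding q' by (simp add: field_simps)
  have "u * w = (lam * u) * (w / lam)" using lam by simp
  also have "\<dots> \<le> (lam * u) powr q / q + (w / lam) powr q' / q'"
    using lam u w by (intro Youngs_inequality q q'1 sum1) auto
  also have "\<dots> \<le> (lam * u) powr q + (w / lam) powr q'"
  proof (intro add_mono)
    show "(lam * u) powr q / q \<le> (lam * u) powr q"
      using q by (simp add: divide_le_eq mult_le_cancel_left1 ge_one_powr_ge_zero)
    show "(w / lam) powr q' / q' \<le> (w / lam) powr q'"
      using q'1 powr_ge_zero[of "w / lam" q'] by (simp add: divide_le_eq mult_le_cancel_left1)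
  qed
  also have "\<dots> = lam powr q * u powr q + lam powr (- q') * w powr q'"
    using lam u w by (simp add: powr_mult powr_divide powr_minus_divide)
  finally show ?thesis .
qed

lemma ball_powr_int:
  fixes x :: "'a::euclidean_space" and a r :: real
  assumes a: "0 \<le> a" "a < real DIM('a)" and r: "0 < r"
  defines "Cst \<equiv> unit_ball_vol DIM('a) * 2 powr a / (1 - 2 powr (a - DIM('a)))"
  shows "integrable lebesgue (\<lambda>y. indicator (ball x r) y * norm (x - y) powr (-a))"
    and "integral\<^sup>L lebesgue (\<lambda>y. indicator (ball x r) y * norm (x - y) powr (-a)) \<le> Cst * r powr (DIM('a) - a)"
proof -
  let ?f = "\<lambda>y. indicator (ball x r) y * norm (x - y) powr (-a)"
  have fe: "(\<lambda>y. ennreal (?f y)) = (\<lambda>y. ennreal (indicator (ball x r) y * norm (y - x) powr (-a)))"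
    by (simp add: norm_minus_commute)
  have m1: "(\<lambda>y. norm (x - y)) \<in> borel_measurable borel"
    by (intro borel_measurable_continuous_onI continuous_intros)
  have m2: "(\<lambda>y. norm (x - y) powr (-a)) \<in> borel_measurable borel"
    by (intro powr_real_measurable m1 borel_measurable_const)
  have mb: "?f \<in> borel_measurable borel"
    by (intro borel_measurable_times borel_measurable_indicator m2) simp
  have m: "?f \<in> borel_measurable lebesgue"
    by (rule measurable_completion) (simp add: mb)
  have nn: "(\<integral>\<^sup>+y. ennreal (?f y) \<partial>lebesgue) \<le> ennreal (Cst * r powr (DIM('a) - a))"
    unfolding nn_integral_completion fe Cst_def using ball_powr_nn[OF a r, of x] by simp
  show int: "integrable lebesgue ?f"
    using nn by (intro integrableI_nonneg m) (auto simp: top.not_eq_extremum intro: le_less_trans)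
  have "ennreal (integral\<^sup>L lebesgue ?f) = (\<integral>\<^sup>+y. ennreal (?f y) \<partial>lebesgue)"
    by (rule nn_integral_eq_integral[OF int, symmetric]) simp
  with nn have "ennreal (integral\<^sup>L lebesgue ?f) \<le> ennreal (Cst * r powr (DIM('a) - a))" by simp
  moreover have "0 \<le> Cst * r powr (DIM('a) - a)"
  proof -
    have "2 powr (a - real DIM('a)) < 1" using a by (intro powr_less_one) auto
    moreover have "0 \<le> unit_ball_vol DIM('a)"
      unfolding unit_ball_vol_def by (intro divide_nonneg_pos) auto
    ultimately show ?thesis unfolding Cst_def by simp
  qed
  ultimately show "integral\<^sup>L lebesgue ?f \<le> Cst * r powr (DIM('a) - a)"
    by (simp add: ennreal_le_iff)
qed

lemma DCT_ev:
  fixes s :: "nat \<Rightarrow> 'a \<Rightarrow> 'b::{banach, second_countable_topology}"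
  assumes "f \<in> borel_measurable M" "\<And>i. s i \<in> borel_measurable M" "integrable M w"
    and lim: "AE x in M. (\<lambda>i. s i x) \<longlonglongrightarrow> f x"
    and bnd: "eventually (\<lambda>i. AE x in M. norm (s i x) \<le> w x) sequentially"
  shows "(\<lambda>i. integral\<^sup>L M (s i)) \<longlonglongrightarrow> integral\<^sup>L M f"
proof -
  from bnd obtain N where w: "\<And>n. N \<le> n \<Longrightarrow> AE x in M. norm (s n x) \<le> w x"
    by (auto simp: eventually_sequentially)
  show ?thesis
  proof (rule LIMSEQ_offset[where k=N], rule integral_dominated_convergence)
    show "AE x in M. norm (s (n + N) x) \<le> w x" for n
      by (rule w) auto
    show "AE x in M. (\<lambda>n. s (n + N) x) \<longlonglongrightarrow> f x"
      using lim
    proof eventually_elim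
      fix x assume "(\<lambda>i. s i x) \<longlonglongrightarrow> f x"
      then show "(\<lambda>n. s (n + N) x) \<longlonglongrightarrow> f x"
        by (rule LIMSEQ_ignore_initial_segment)
    qed
  qed (use assms in auto)
qed

lemma lebesgue_ball_int: "integrable lebesgue (indicator (ball (c::'a::euclidean_space) r) :: 'a \<Rightarrow> real)"
proof -
  have "integrable lborel (indicator (ball c r) :: 'a \<Rightarrow> real)"
    using emeasure_lborel_ball_finite[of c r] by (intro integrable_real_indicator) auto
  then show ?thesis
    by (subst integrable_completion) auto
qed

locale mainloc = kern \<psi> M for \<psi> :: "'a::euclidean_space \<Rightarrow> real" and M +
  fixes Fp :: "'a \<Rightarrow> real" and q R :: real
  assumes Fp_meas: "Fp \<in> borel_measurable lebesgue"
    and Fp_Lq: "integrable lebesgue (\<lambda>y. \<bar>Fp y\<bar> powr q)"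
    and Fp_supp: "\<And>y. Fp y \<noteq> 0 \<Longrightarrow> norm y < R"
    and q_gt: "real DIM('a) < q"
begin

definition "qq = q / (q - 1)"
definition "aa = (real DIM('a) - 1) * qq"
definition "CC = M * (\<bar>R\<bar> + 1) ^ DIM('a)"
definition "Cst = unit_ball_vol DIM('a) * 2 powr aa / (1 - 2 powr (aa - DIM('a)))"
definition "AA = integral\<^sup>L lebesgue (\<lambda>y. \<bar>Fp y\<bar> powr q)"
definition "Phi x y = Fp y *\<^sub>R K x y"

lemma q1: "q > 1"
proof -
  have "real DIM('a) \<ge> 1" using DIM_positive[where 'a='a] by linarith
  then show ?thesis using q_gt by linarith
qed

lemma qq1: "qq > 1" using q1 unfolding qq_def by (simp add: less_divide_eq)

lemma aa_nonneg: "0 \<le> aa"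
  using qq1 DIM_positive[where 'a='a] unfolding aa_def by (intro mult_nonneg_nonneg) auto

lemma aa_less: "aa < real DIM('a)"
proof -
  have "(real DIM('a) - 1) * q < real DIM('a) * (q - 1)" using q_gt by (simp add: algebra_simps)
  then show ?thesis using q1 unfolding aa_def qq_def by (simp add: field_simps)
qed

lemma CC_nonneg: "0 \<le> CC" unfolding CC_def using M_nonneg by simp

lemma Cst_nonneg: "0 \<le> Cst"
proof -
  have "2 powr (aa - real DIM('a)) < 1" using aa_less by (intro powr_less_one) auto
  moreover have "0 \<le> unit_ball_vol DIM('a)"
    unfolding unit_ball_vol_def by (intro divide_nonneg_pos) auto
  ultimately show ?thesis unfolding Cst_def by simp
qed

lemma AA_nonneg: "0 \<le> AA" unfolding AA_def by (intro integral_nonneg_AE) auto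

lemma Kpow:
  assumes "Fp y \<noteq> 0"
  shows "norm (K x y) powr qq \<le> CC powr qq * norm (x - y) powr (-aa)"
proof (cases "x = y")
  case True
  then show ?thesis by (simp add: K_diag)
next
  case False
  have ny: "norm y \<le> \<bar>R\<bar>" using Fp_supp[OF assms] by simp
  have kb: "norm (K x y) \<le> CC * norm (x - y) powr (1 - real DIM('a))"
    using K_bound[OF False ny] unfolding CC_def by simp
  have "norm (K x y) powr qq \<le> (CC * norm (x - y) powr (1 - real DIM('a))) powr qq"
    using qq1 by (intro powr_mono2 kb) auto
  also have "\<dots> = CC powr qq * norm (x - y) powr ((1 - real DIM('a)) * qq)"
    using CC_nonneg by (simp add: powr_mult powr_powr)
  also have "(1 - real DIM('a)) * qq = - aa" unfolding aa_def by (simp add: algebra_simps)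
  finally show ?thesis .
qed

lemma G_nonneg: "0 \<le> lam powr q * \<bar>Fp y\<bar> powr q + lam powr (-qq) * CC powr qq * (indicator S y * norm (x - y) powr (-aa))"
  by (intro add_nonneg_nonneg mult_nonneg_nonneg) auto

lemma Phi_bound:
  assumes lam: "lam > 0" and S: "Fp y \<noteq> 0 \<Longrightarrow> y \<in> S"
  shows "norm (Phi x y) \<le> lam powr q * \<bar>Fp y\<bar> powr q + lam powr (-qq) * CC powr qq * (indicator S y * norm (x - y) powr (-aa))"
proof (cases "Fp y = 0")
  case True
  then show ?thesis using G_nonneg by (simp add: Phi_def)
next
  case False
  have "norm (Phi x y) = \<bar>Fp y\<bar> * norm (K x y)" by (simp add: Phi_def)
  also have "\<dots> \<le> lam powr q * \<bar>Fp y\<bar> powr q + lam powr (-qq) * norm (K x y) powr qq"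
    by (rule young_lam[OF q1 qq_def]) (auto simp: lam)
  also have "\<dots> \<le> lam powr q * \<bar>Fp y\<bar> powr q + lam powr (-qq) * (CC powr qq * norm (x - y) powr (-aa))"
    using Kpow[OF False] by (intro add_left_mono mult_left_mono) auto
  also have "\<dots> = lam powr q * \<bar>Fp y\<bar> powr q + lam powr (-qq) * CC powr qq * (indicator S y * norm (x - y) powr (-aa))"
    using S[OF False] by simp
  finally show ?thesis .
qed

lemma Fp_int: "integrable lebesgue Fp"
proof (rule Bochner_Integration.integrable_bound[OF Bochner_Integration.integrable_add[OF lebesgue_ball_int[of 0 "\<bar>R\<bar> + 1"] Fp_Lq] Fp_meas])
  show "AE y in lebesgue. norm (Fp y) \<le> norm (indicator (ball 0 (\<bar>R\<bar> + 1)) y + \<bar>Fp y\<bar> powr q)"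
  proof (rule AE_I2)
    fix y
    show "norm (Fp y) \<le> norm (indicator (ball 0 (\<bar>R\<bar> + 1)) y + \<bar>Fp y\<bar> powr q)"
    proof (cases "Fp y = 0")
      case False
      then have "y \<in> ball 0 (\<bar>R\<bar> + 1)" using Fp_supp[OF False] by simp
      moreover have "\<bar>Fp y\<bar> \<le> 1 + \<bar>Fp y\<bar> powr q"
      proof (cases "\<bar>Fp y\<bar> \<le> 1")
        case False
        then have "\<bar>Fp y\<bar> powr 1 \<le> \<bar>Fp y\<bar> powr q" using q1 by (intro powr_mono) auto
        then show ?thesis using False by simp
      qed (simp add: add_increasing2)
      ultimately show ?thesis by simp
    qed simp
  qed
qed

lemma Phi_meas: "Phi x \<in> borel_measurable lebesgue"
  unfolding Phi_def[abs_def] by (intro borel_measurable_scaleR Fp_meas K_meas)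

lemma Phi_int: "integrable lebesgue (Phi x)"
proof -
  define \<rho> where "\<rho> = \<bar>R\<bar> + norm x + 1"
  have \<rho>: "0 < \<rho>" by (simp add: \<rho>_def add_nonneg_pos)
  have I: "integrable lebesgue (\<lambda>y. \<bar>Fp y\<bar> powr q + CC powr qq * (indicator (ball x \<rho>) y * norm (x - y) powr (-aa)))"
    by (intro Bochner_Integration.integrable_add Fp_Lq integrable_mult_right ball_powr_int(1) aa_nonneg aa_less \<rho>)
  show ?thesis
  proof (rule Bochner_Integration.integrable_bound[OF I Phi_meas], rule AE_I2)
    fix y
    have "norm (Phi x y) \<le> 1 powr q * \<bar>Fp y\<bar> powr q + 1 powr (-qq) * CC powr qq * (indicator (ball x \<rho>) y * norm (x - y) powr (-aa))"
    proof (rule Phi_bound)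
      assume "Fp y \<noteq> 0"
      then have "norm y < \<bar>R\<bar>" using Fp_supp by fastforce
      then show "y \<in> ball x \<rho>"
        using norm_triangle_ineq4[of x y] by (simp add: \<rho>_def dist_norm)
    qed simp
    also have "\<dots> \<le> norm (\<bar>Fp y\<bar> powr q + CC powr qq * (indicator (ball x \<rho>) y * norm (x - y) powr (-aa)))"
      by simp
    finally show "norm (Phi x y) \<le> norm (\<bar>Fp y\<bar> powr q + CC powr qq * (indicator (ball x \<rho>) y * norm (x - y) powr (-aa)))" .
  qed
qed

lemma near_bound:
  assumes lam: "lam > 0" and \<delta>: "\<delta> > 0" and xc: "norm (x - c) < \<delta>"
  shows "norm (integral\<^sup>L lebesgue (\<lambda>y. indicator (ball c \<delta>) y *\<^sub>R Phi x y))
    \<le> lam powr q * AA + lam powr (-qq) * CC powr qq * (Cst * (2 * \<delta>) powr (real DIM('a) - aa))"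
proof -
  let ?I = "\<lambda>y. indicator (ball x (2 * \<delta>)) y * norm (x - y) powr (-aa)"
  let ?G = "\<lambda>y. lam powr q * \<bar>Fp y\<bar> powr q + lam powr (-qq) * CC powr qq * ?I y"
  have \<delta>2: "0 < 2 * \<delta>" using \<delta> by simp
  have intI: "integrable lebesgue ?I" by (rule ball_powr_int(1)[OF aa_nonneg aa_less \<delta>2])
  have intG: "integrable lebesgue ?G"
    by (intro Bochner_Integration.integrable_add integrable_mult_right Fp_Lq intI)
  have intN: "integrable lebesgue (\<lambda>y. indicator (ball c \<delta>) y *\<^sub>R Phi x y)"
    by (intro integrable_mult_indicator Phi_int) auto
  have "norm (integral\<^sup>L lebesgue (\<lambda>y. indicator (ball c \<delta>) y *\<^sub>R Phi x y))
      \<le> integral\<^sup>L lebesgue (\<lambda>y. norm (indicator (ball c \<delta>) y *\<^sub>R Phi x y))"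
    by (rule integral_norm_bound)
  also have "\<dots> \<le> integral\<^sup>L lebesgue ?G"
  proof (rule integral_mono[OF integrable_norm[OF intN] intG])
    fix y
    show "norm (indicator (ball c \<delta>) y *\<^sub>R Phi x y) \<le> ?G y"
    proof (cases "y \<in> ball c \<delta>")
      case True
      have "y \<in> ball x (2 * \<delta>)"
        using True xc norm_triangle_ineq[of "x - c" "c - y"] by (simp add: dist_norm)
      then have "norm (Phi x y) \<le> ?G y" using Phi_bound[OF lam, of y "ball x (2 * \<delta>)" x] by simp
      then show ?thesis using True by simp
    next
      case False
      then show ?thesis using G_nonneg[of lam y "ball x (2 * \<delta>)" x] by simp
    qed
  qed
  also have "\<dots> = lam powr q * AA + lam powr (-qq) * CC powr qq * integral\<^sup>L lebesgue ?I"
    unfolding AA_def using Fp_Lq intI by (simp add: integral_add integral_mult_right)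
  also have "\<dots> \<le> lam powr q * AA + lam powr (-qq) * CC powr qq * (Cst * (2 * \<delta>) powr (real DIM('a) - aa))"
    using ball_powr_int(2)[OF aa_nonneg aa_less \<delta>2, of x] unfolding Cst_def
    by (intro add_left_mono mult_left_mono) auto
  finally show ?thesis .
qed

lemma far_conv:
  assumes \<delta>: "\<delta> > 0" and xs: "xs \<longlonglongrightarrow> x0"
  shows "(\<lambda>k. integral\<^sup>L lebesgue (\<lambda>y. (1 - indicator (ball x0 \<delta>) y) *\<^sub>R Phi (xs k) y))
    \<longlonglongrightarrow> integral\<^sup>L lebesgue (\<lambda>y. (1 - indicator (ball x0 \<delta>) y) *\<^sub>R Phi x0 y)"
proof (rule DCT_ev[where w="\<lambda>y. CC * (\<delta> / 2) powr (1 - real DIM('a)) * \<bar>Fp y\<bar>"])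
  have mi: "(\<lambda>y. 1 - indicator (ball x0 \<delta>) y :: real) \<in> borel_measurable lebesgue"
    by (intro borel_measurable_diff borel_measurable_const borel_measurable_indicator) auto
  show "(\<lambda>y. (1 - indicator (ball x0 \<delta>) y) *\<^sub>R Phi x0 y) \<in> borel_measurable lebesgue"
    by (intro borel_measurable_scaleR mi Phi_meas)
  show "(\<lambda>y. (1 - indicator (ball x0 \<delta>) y) *\<^sub>R Phi (xs k) y) \<in> borel_measurable lebesgue" for k
    by (intro borel_measurable_scaleR mi Phi_meas)
  show "integrable lebesgue (\<lambda>y. CC * (\<delta> / 2) powr (1 - real DIM('a)) * \<bar>Fp y\<bar>)"
    by (intro integrable_mult_right integrable_abs Fp_int)
  show "AE y in lebesgue. (\<lambda>k. (1 - indicator (ball x0 \<delta>) y) *\<^sub>R Phi (xs k) y)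
      \<longlonglongrightarrow> (1 - indicator (ball x0 \<delta>) y) *\<^sub>R Phi x0 y"
  proof (rule AE_I2)
    fix y
    show "(\<lambda>k. (1 - indicator (ball x0 \<delta>) y) *\<^sub>R Phi (xs k) y)
      \<longlonglongrightarrow> (1 - indicator (ball x0 \<delta>) y) *\<^sub>R Phi x0 y"
    proof (cases "y \<in> ball x0 \<delta>")
      case True
      then show ?thesis by simp
    next
      case False
      then have "y \<noteq> x0" using \<delta> by auto
      from isCont_tendsto_compose[OF K_cont_x[OF this] xs]
      have "(\<lambda>k. K (xs k) y) \<longlonglongrightarrow> K x0 y" .
      then show ?thesis unfolding Phi_def by (intro tendsto_intros)
    qed
  qed
  have "eventually (\<lambda>k. dist (xs k) x0 < \<delta> / 2) sequentially"
    using xs \<delta> by (intro tendstoD) auto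
  then show "eventually (\<lambda>k. AE y in lebesgue. norm ((1 - indicator (ball x0 \<delta>) y) *\<^sub>R Phi (xs k) y)
      \<le> CC * (\<delta> / 2) powr (1 - real DIM('a)) * \<bar>Fp y\<bar>) sequentially"
  proof eventually_elim
    case (elim k)
    show ?case
    proof (rule AE_I2)
      fix y
      have r0: "0 \<le> CC * (\<delta> / 2) powr (1 - real DIM('a)) * \<bar>Fp y\<bar>"
        using CC_nonneg by simp
      show "norm ((1 - indicator (ball x0 \<delta>) y) *\<^sub>R Phi (xs k) y) \<le> CC * (\<delta> / 2) powr (1 - real DIM('a)) * \<bar>Fp y\<bar>"
      proof (cases "y \<in> ball x0 \<delta> \<or> Fp y = 0")
        case True
        then show ?thesis using r0 by (auto simp: Phi_def)
      next
        case False
        then have yb: "\<delta> \<le> dist x0 y" and F0: "Fp y \<noteq> 0" by auto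
        have "dist x0 y \<le> dist x0 (xs k) + dist (xs k) y" by (rule dist_triangle)
        then have d2: "\<delta> / 2 \<le> norm (xs k - y)"
          using yb elim norm_minus_commute[of y "xs k"] by (simp add: dist_commute dist_norm)
        then have ne: "xs k \<noteq> y" using \<delta> by auto
        have ny: "norm y \<le> \<bar>R\<bar>" using Fp_supp[OF F0] by simp
        have "norm (K (xs k) y) \<le> CC * norm (xs k - y) powr (1 - real DIM('a))"
          using K_bound[OF ne ny] unfolding CC_def by simp
        also have "\<dots> \<le> CC * (\<delta> / 2) powr (1 - real DIM('a))"
          using CC_nonneg d2 \<delta> by (intro mult_left_mono powr_mono2') auto
        finally have kb: "norm (K (xs k) y) \<le> CC * (\<delta> / 2) powr (1 - real DIM('a))" .
        have "norm ((1 - indicator (ball x0 \<delta>) y) *\<^sub>R Phi (xs k) y) = \<bar>Fp y\<bar> * norm (K (xs k) y)"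
          using False by (simp add: Phi_def)
        also have "\<dots> \<le> \<bar>Fp y\<bar> * (CC * (\<delta> / 2) powr (1 - real DIM('a)))"
          by (intro mult_left_mono kb) auto
        finally show ?thesis by (simp add: mult.commute)
      qed
    qed
  qed
qed

lemma V_cont: "isCont (\<lambda>x. integral\<^sup>L lebesgue (Phi x)) x0"
  unfolding continuous_at_sequentially comp_def
proof (intro allI impI)
  fix xs assume xs: "xs \<longlonglongrightarrow> x0"
  let ?V = "\<lambda>x. integral\<^sup>L lebesgue (Phi x)"
  show "(\<lambda>k. ?V (xs k)) \<longlonglongrightarrow> ?V x0"
  proof (rule tendstoI)
    fix \<epsilon> :: real assume \<epsilon>: "\<epsilon> > 0"
    define lam where "lam = (\<epsilon> / (8 * (AA + 1))) powr (1 / q)"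
    have e8: "0 < \<epsilon> / (8 * (AA + 1))" using \<epsilon> AA_nonneg by simp
    have lam: "lam > 0" using \<epsilon> AA_nonneg by (simp add: lam_def)
    have lamq: "lam powr q = \<epsilon> / (8 * (AA + 1))"
      using e8 q1 \<epsilon> AA_nonneg by (simp add: lam_def powr_powr)
    have t1: "lam powr q * AA \<le> \<epsilon> / 8"
    proof -
      have "lam powr q * AA = \<epsilon> / 8 * (AA / (AA + 1))" using AA_nonneg by (simp add: lamq)
      also have "\<dots> \<le> \<epsilon> / 8 * 1"
        using \<epsilon> AA_nonneg by (intro mult_left_mono) auto
      finally show ?thesis by simp
    qed
    define B where "B = lam powr (-qq) * CC powr qq * Cst"
    have B: "0 \<le> B" unfolding B_def using Cst_nonneg by simp
    define e where "e = real DIM('a) - aa"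
    have e: "e > 0" using aa_less by (simp add: e_def)
    define \<delta> where "\<delta> = (\<epsilon> / (8 * (B + 1))) powr (1 / e) / 2"
    have e8': "0 < \<epsilon> / (8 * (B + 1))" using \<epsilon> B by simp
    have \<delta>: "\<delta> > 0" using \<epsilon> B by (simp add: \<delta>_def)
    have de: "(2 * \<delta>) powr e = \<epsilon> / (8 * (B + 1))"
      using e8' e \<epsilon> B by (simp add: \<delta>_def powr_powr)
    have t2: "B * (2 * \<delta>) powr e \<le> \<epsilon> / 8"
    proof -
      have "B * (2 * \<delta>) powr e = \<epsilon> / 8 * (B / (B + 1))" using B by (simp add: de)
      also have "\<dots> \<le> \<epsilon> / 8 * 1"
        using \<epsilon> B by (intro mult_left_mono) auto
      finally show ?thesis by simp
    qed
    define near where "near x = integral\<^sup>L lebesgue (\<lambda>y. indicator (ball x0 \<delta>) y *\<^sub>R Phi x y)" for x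
    define far where "far x = integral\<^sup>L lebesgue (\<lambda>y. (1 - indicator (ball x0 \<delta>) y) *\<^sub>R Phi x y)" for x
    have split: "?V x = near x + far x" for x
    proof -
      have i1: "integrable lebesgue (\<lambda>y. indicator (ball x0 \<delta>) y *\<^sub>R Phi x y)"
        by (intro integrable_mult_indicator Phi_int) auto
      have "far x = integral\<^sup>L lebesgue (\<lambda>y. Phi x y - indicator (ball x0 \<delta>) y *\<^sub>R Phi x y)"
        unfolding far_def by (intro Bochner_Integration.integral_cong refl) (simp add: algebra_simps)
      also have "\<dots> = ?V x - near x"
        unfolding near_def by (rule Bochner_Integration.integral_diff[OF Phi_int i1])
      finally show ?thesis by simp
    qed
    have nb: "norm (near x) \<le> \<epsilon> / 4" if "norm (x - x0) < \<delta>" for x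
    proof -
      have "norm (near x) \<le> lam powr q * AA + lam powr (-qq) * CC powr qq * (Cst * (2 * \<delta>) powr (real DIM('a) - aa))"
        unfolding near_def by (rule near_bound[OF lam \<delta> that])
      also have "\<dots> = lam powr q * AA + B * (2 * \<delta>) powr e" by (simp add: B_def e_def)
      also have "\<dots> \<le> \<epsilon> / 4" using t1 t2 by simp
      finally show ?thesis .
    qed
    have ev1: "eventually (\<lambda>k. dist (xs k) x0 < \<delta>) sequentially"
      using xs \<delta> by (intro tendstoD) auto
    have ev2: "eventually (\<lambda>k. dist (far (xs k)) (far x0) < \<epsilon> / 4) sequentially"
      using far_conv[OF \<delta> xs] \<epsilon> unfolding far_def by (intro tendstoD) auto
    show "eventually (\<lambda>k. dist (?V (xs k)) (?V x0) < \<epsilon>) sequentially"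
      using ev1 ev2
    proof eventually_elim
      case (elim k)
      have n1: "norm (near (xs k)) \<le> \<epsilon> / 4" using elim by (intro nb) (simp add: dist_norm)
      have n2: "norm (near x0) \<le> \<epsilon> / 4" using \<delta> by (intro nb) simp
      have "dist (?V (xs k)) (?V x0) = norm (near (xs k) - near x0 + (far (xs k) - far x0))"
        by (simp add: split dist_norm algebra_simps)
      also have "\<dots> \<le> norm (near (xs k)) + norm (near x0) + norm (far (xs k) - far x0)"
        using norm_triangle_ineq[of "near (xs k) - near x0" "far (xs k) - far x0"]
          norm_triangle_ineq4[of "near (xs k)" "near x0"] by linarith
      also have "\<dots> < \<epsilon>"
      proof -
        have n3: "norm (far (xs k) - far x0) < \<epsilon> / 4" using elim(2) by (simp add: dist_norm)
        show ?thesis using n1 n2 n3 \<epsilon> by linarith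
      qed
      finally show ?case .
    qed
  qed
qed

end



theorem theorem3:
  fixes \<psi> :: "real ^ 'n \<Rightarrow> real"
    and \<Omega> :: "(real ^ 'n) set"
    and F :: "real ^ 'n \<Rightarrow> real"
    and q :: real
    and v :: "real ^ 'n \<Rightarrow> real ^ 'n"
  assumes n2: "CARD('n) \<ge> 2"
    and psi_smooth: "smooth \<psi>"
    and psi_compact: "compact (supp \<psi>)"
    and psi_supp: "supp \<psi> \<subseteq> ball 0 1"
    and psi_nz: "\<exists>x. \<psi> x \<noteq> 0"
    and Omega_open: "open \<Omega>"
    and Omega_bdd: "bounded \<Omega>"
    and Omega_star: "\<forall>p\<in>cball 0 1. star_shaped_wrt \<Omega> p"
    and q_gt: "q > real CARD('n)"
    and F_meas: "set_borel_measurable lebesgue \<Omega> F"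
    and F_Lq: "set_integrable lebesgue \<Omega> (\<lambda>y. \<bar>F y\<bar> powr q)"
    and v_def: "\<And>x. v x = (LINT y:\<Omega>|lebesgue. (F y *
        (LBINT \<xi>:{norm (x - y)..}.
            \<psi> (y + (\<xi> / norm (x - y)) *\<^sub>R (x - y)) * \<xi> ^ (CARD('n) - 1))
        / norm (x - y) ^ CARD('n)) *\<^sub>R (x - y))"
  shows "continuous_on UNIV v"
proof -
  have psi_cont: "continuous_on UNIV \<psi>"
  proof -
    have "Ck 0 \<psi>" using psi_smooth unfolding smooth_def by blast
    then show ?thesis by simp
  qed
  have sub: "{x. \<psi> x \<noteq> 0} \<subseteq> supp \<psi>" unfolding supp_def by (rule closure_subset)
  have psi_zero: "norm z < 1" if "\<psi> z \<noteq> 0" for z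
    using that sub psi_supp by auto
  have cim: "compact (\<psi> ` supp \<psi>)"
    by (intro compact_continuous_image continuous_on_subset[OF psi_cont] psi_compact) auto
  then obtain B where B: "\<And>x. x \<in> \<psi> ` supp \<psi> \<Longrightarrow> norm x \<le> B"
    using bounded_iff[THEN iffD1, OF compact_imp_bounded[OF cim]] by blast
  define M where "M = \<bar>B\<bar>"
  have psi_bdd: "\<bar>\<psi> z\<bar> \<le> M" for z
  proof (cases "\<psi> z = 0")
    case False
    then have "z \<in> supp \<psi>" using sub by auto
    then show ?thesis using B[of "\<psi> z"] by (simp add: M_def)
  qed (simp add: M_def)
  obtain R where R: "R > 0" "\<Omega> \<subseteq> ball 0 R" using bounded_subset_ballD[OF Omega_bdd, of 0] by blast
  define Fp where "Fp y = indicator \<Omega> y * F y" for y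
  interpret mainloc \<psi> M Fp q R
  proof unfold_locales
    show "continuous_on UNIV \<psi>" by (rule psi_cont)
    show "\<And>z. \<psi> z \<noteq> 0 \<Longrightarrow> norm z < 1" by (rule psi_zero)
    show "\<And>z. \<bar>\<psi> z\<bar> \<le> M" by (rule psi_bdd)
    show "Fp \<in> borel_measurable lebesgue"
      using F_meas unfolding set_borel_measurable_def Fp_def[abs_def] by simp
    have "(\<lambda>y. \<bar>Fp y\<bar> powr q) = (\<lambda>y. indicator \<Omega> y *\<^sub>R \<bar>F y\<bar> powr q)"
      by (auto simp: Fp_def indicator_def)
    then show "integrable lebesgue (\<lambda>y. \<bar>Fp y\<bar> powr q)"
      using F_Lq unfolding set_integrable_def by simp
    show "\<And>y. Fp y \<noteq> 0 \<Longrightarrow> norm y < R"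
      using R by (auto simp: Fp_def indicator_def)
    show "real DIM(real ^ 'n) < q" using q_gt by simp
  qed
  have veq: "v x = integral\<^sup>L lebesgue (Phi x)" for x
    unfolding v_def set_lebesgue_integral_def[where M=lebesgue]
  proof (rule Bochner_Integration.integral_cong[OF refl])
    fix y
    show "indicator \<Omega> y *\<^sub>R ((F y * (LBINT \<xi>:{norm (x - y)..}.
            \<psi> (y + (\<xi> / norm (x - y)) *\<^sub>R (x - y)) * \<xi> ^ (CARD('n) - 1))
        / norm (x - y) ^ CARD('n)) *\<^sub>R (x - y)) = Phi x y"
    proof (cases "x = y")
      case True
      then show ?thesis by (simp add: Phi_def K_diag)
    next
      case False
      have s: "(LBINT \<xi>:{norm (x - y)..}.
            \<psi> (y + (\<xi> / norm (x - y)) *\<^sub>R (x - y)) * \<xi> ^ (CARD('n) - 1))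
        / norm (x - y) ^ CARD('n) = g x y"
        using subst[OF False] by simp
      have s': "F y * (LBINT \<xi>:{norm (x - y)..}.
            \<psi> (y + (\<xi> / norm (x - y)) *\<^sub>R (x - y)) * \<xi> ^ (CARD('n) - 1))
        / norm (x - y) ^ CARD('n) = F y * g x y"
        using s by (simp only: times_divide_eq_right[symmetric])
      show ?thesis
        by (simp only: s') (simp add: Phi_def K_def Fp_def)
    qed
  qed
  have "v = (\<lambda>x. integral\<^sup>L lebesgue (Phi x))" using veq by auto
  then show ?thesis
    by (auto intro!: continuous_at_imp_continuous_on V_cont)
qed

end
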